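(* Consider POWERSET SALIQUOT. Then $\mathcal{SG}(0)=0$, and $\mathcal{SG}(n)=2^p$, if $2^p$ is largest power of two divisor of $n\ge 1$.
   Context: POWERSET SALIQUOT is the impartial normal-play game on nonnegative integer heaps where from a heap $n\ge1$ a player chooses any nonempty set $S$ of positive divisors of $n$ and moves to the disjunctive sum of the heaps $n-d$, $d\in S$; the heap $0$ is terminal. $\mathcal{SG}$ denotes the Sprague-Grundy value (mex rule, nim-sum). *)

theory Defs
  imports Main
begin

definition mex :: "nat set \<Rightarrow> nat" where
  "mex A = (LEAST k. k \<notin> A)"

definition nim_sum :: "(nat \<Rightarrow> nat) \<Rightarrow> nat set \<Rightarrow> nat" where
  "nim_sum f S = Finite_Set.fold (\<lambda>d acc. Bit_Operations.xor (f d) acc) 0 S"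

definition divs :: "nat \<Rightarrow> nat set" where
  "divs n = {d. 0 < d \<and> d dvd n}"

text \<open>Sprague-Grundy value of POWERSET SALIQUOT: from heap n \<ge> 1 one moves to the
  disjunctive sum of heaps n - d, d \<in> S, for a nonempty set S of positive divisors of n;
  the SG value of a disjunctive sum is the nim-sum of the SG values.\<close>
function sg :: "nat \<Rightarrow> nat" where
  "sg n = (if n = 0 then 0 else
     mex {nim_sum (\<lambda>d. if d \<in> divs n then sg (n - d) else 0) S
          | S. S \<noteq> {} \<and> S \<subseteq> divs n})"
  by auto
termination
  by (relation "measure id") (auto simp: divs_def)

end

theory Submission
  imports Defs
begin

lemma nim_sum_empty: "nim_sum f {} = 0"
  by (simp add: nim_sum_def)

lemma nim_sum_insert:
  assumes "finite S" "x \<notin> S"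
  shows "nim_sum f (insert x S) = Bit_Operations.xor (f x) (nim_sum f S)"
proof -
  interpret comp_fun_commute "\<lambda>d acc. Bit_Operations.xor (f d) (acc::nat)"
    by unfold_locales (auto simp: fun_eq_iff ac_simps)
  show ?thesis unfolding nim_sum_def using assms by (simp add: fold_insert)
qed

lemma bit_nim_sum:
  assumes "finite S"
  shows "bit (nim_sum f S) i = odd (card {d\<in>S. bit (f d) i})"
  using assms
proof (induction S rule: finite_induct)
  case empty
  then show ?case by (simp add: nim_sum_empty)
next
  case (insert x S)
  have fin: "finite {d\<in>S. bit (f d) i}" using insert by simp
  show ?case
  proof (cases "bit (f x) i")
    case True
    then have "{d\<in>insert x S. bit (f d) i} = insert x {d\<in>S. bit (f d) i}" by auto
    then show ?thesis using insert fin True by (simp add: nim_sum_insert bit_xor_iff)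
  next
    case False
    then have "{d\<in>insert x S. bit (f d) i} = {d\<in>S. bit (f d) i}" by auto
    then show ?thesis using insert fin False by (simp add: nim_sum_insert bit_xor_iff)
  qed
qed

lemma val_exists: "0 < (x::nat) \<Longrightarrow> \<exists>q. 2 ^ q dvd x \<and> \<not> 2 ^ Suc q dvd x"
proof (induction x rule: less_induct)
  case (less x)
  show ?case
  proof (cases "even x")
    case True
    then obtain y where y: "x = 2 * y" by auto
    with less have "0 < y" "y < x" by auto
    with less obtain q where "2 ^ q dvd y" "\<not> 2 ^ Suc q dvd y" by blast
    then have "2 ^ Suc q dvd x" "\<not> 2 ^ Suc (Suc q) dvd x" using y by auto
    then show ?thesis by blast
  next
    case False
    then show ?thesis by (intro exI[of _ 0]) auto
  qed
qed

lemma sg0: "sg 0 = 0" by simp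

declare sg.simps [simp del]

lemma sg_pos: "n \<noteq> 0 \<Longrightarrow> sg n = mex {nim_sum (\<lambda>d. if d \<in> divs n then sg (n - d) else 0) S | S. S \<noteq> {} \<and> S \<subseteq> divs n}"
  by (subst sg.simps) simp

lemma key_div:
  fixes n d p :: nat
  assumes "2 ^ p dvd n" "\<not> 2 ^ Suc p dvd n" "d dvd n" "0 < d" "d < n"
  shows "2 ^ Suc p dvd (n - d) \<or> \<not> 2 ^ p dvd (n - d)"
proof -
  obtain c where c: "n = d * c" using assms by auto
  have c1: "c \<ge> 1" using c assms by (cases c) auto
  have nd: "n - d = d * (c - 1)" using c c1 by (simp add: algebra_simps)
  show ?thesis
  proof (cases "even c")
    case False
    have "coprime (2 ^ p) c" using False by simp
    then have "2 ^ p dvd d" using assms(1) c by (metis coprime_dvd_mult_left_iff)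
    moreover have "2 dvd (c - 1)" using False c1 by presburger
    ultimately have "2 ^ p * 2 dvd d * (c - 1)" by (rule mult_dvd_mono)
    then show ?thesis using nd by (simp add: mult.commute)
  next
    case True
    have "\<not> 2 ^ p dvd d"
    proof
      assume "2 ^ p dvd d"
      then have "2 ^ p * 2 dvd d * c" using True by (rule mult_dvd_mono)
      then show False using assms(2) c by (simp add: mult.commute)
    qed
    moreover have "coprime (2 ^ p) (c - 1)" using True c1 by simp
    ultimately have "\<not> 2 ^ p dvd d * (c - 1)" by (metis coprime_dvd_mult_left_iff)
    then show ?thesis using nd by simp
  qed
qed

lemma high_bits: "(k::nat) < 2 ^ p \<Longrightarrow> p \<le> i \<Longrightarrow> \<not> bit k i"
proof -
  assume "k < 2 ^ p" "p \<le> i"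
  then have "k < 2 ^ i" using power_increasing[of p i "2::nat"] by linarith
  then show "\<not> bit k i" by (simp add: bit_iff_odd)
qed

theorem mainTheorem15:
  shows "sg 0 = 0 \<and>
    (\<forall>n p. 1 \<le> n \<longrightarrow> 2 ^ p dvd n \<longrightarrow> \<not> 2 ^ (Suc p) dvd n \<longrightarrow> sg n = 2 ^ p)"
proof -
  have main: "\<And>p. 1 \<le> n \<Longrightarrow> 2 ^ p dvd n \<Longrightarrow> \<not> 2 ^ (Suc p) dvd n \<Longrightarrow> sg n = 2 ^ p" for n
  proof (induction n rule: less_induct)
    case (less n p)
    define F where "F = (\<lambda>d. if d \<in> divs n then sg (n - d) else 0)"
    define A where "A = {nim_sum F S | S. S \<noteq> {} \<and> S \<subseteq> divs n}"
    have n0: "n \<noteq> 0" using less by auto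
    have sgn: "sg n = mex A" unfolding A_def F_def using n0 by (rule sg_pos)
    have findivs: "finite (divs n)"
      by (rule finite_subset[of _ "{..n}"]) (use n0 in \<open>auto simp: divs_def intro: dvd_imp_le\<close>)
    have nobit: "\<not> bit (F d) p" if "d \<in> divs n" for d
    proof (cases "d = n")
      case True
      then show ?thesis using that by (simp add: F_def sg0)
    next
      case False
      have dd: "d dvd n" "0 < d" using that by (auto simp: divs_def)
      then have "d \<le> n" using n0 by (simp add: dvd_imp_le)
      with False have dn: "d < n" by simp
      obtain q where q: "2 ^ q dvd (n - d)" "\<not> 2 ^ Suc q dvd (n - d)"
        using val_exists[of "n - d"] dn by auto
      have "sg (n - d) = 2 ^ q" using less.IH[of "n - d" q] q dn dd by simp
      moreover have "q \<noteq> p" using key_div[OF less.prems(2,3) dd dn] q by auto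
      ultimately show ?thesis using that by (simp add: F_def bit_exp_iff)
    qed
    have notin: "2 ^ p \<notin> A"
    proof
      assume "2 ^ p \<in> A"
      then have "\<exists>S. S \<noteq> {} \<and> S \<subseteq> divs n \<and> nim_sum F S = 2 ^ p"
        unfolding A_def mem_Collect_eq by (elim exE conjE) (intro exI conjI, assumption+, simp)
      then obtain S where S: "S \<noteq> {}" "S \<subseteq> divs n" "nim_sum F S = 2 ^ p"
        by blast
      have fS: "finite S" using S findivs finite_subset by blast
      have "{d\<in>S. bit (F d) p} = {}" using S nobit by auto
      then have "\<not> bit (nim_sum F S) p" using bit_nim_sum[OF fS, of F p] by (simp only: card.empty) simp
      then show False using S by (simp add: bit_exp_iff)
    qed
    have isin: "k \<in> A" if k: "k < 2 ^ p" for k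
    proof -
      define T where "T = (\<lambda>a. (2::nat) ^ a) ` {a. a < p \<and> bit k a}"
      define S where "S = insert n T"
      have Tsub: "T \<subseteq> divs n"
      proof
        fix x assume "x \<in> T"
        then obtain a where a: "a < p" "x = 2 ^ a" unfolding T_def by auto
        have "2 ^ a dvd (2::nat) ^ p" using a by (simp add: le_imp_power_dvd)
        then have "x dvd n" using a less.prems(2) dvd_trans by blast
        then show "x \<in> divs n" using a by (simp add: divs_def)
      qed
      have Ssub: "S \<subseteq> divs n" using Tsub n0 by (auto simp: S_def divs_def)
      have fS: "finite S" using Ssub findivs finite_subset by blast
      have FT: "F (2 ^ a) = 2 ^ a" if "a < p" for a
      proof -
        have pa: "2 ^ a < (2::nat) ^ p" using that by simp
        have dv: "2 ^ a dvd (2::nat) ^ p" using that by (simp add: le_imp_power_dvd)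
        then have dn: "2 ^ a dvd n" using less.prems(2) dvd_trans by blast
        have "2 ^ p \<le> n" using less.prems(2) n0 dvd_imp_le by blast
        then have lt: "2 ^ a < n" using pa by linarith
        have "2 ^ Suc a dvd (2::nat) ^ p" using that by (intro le_imp_power_dvd) simp
        then have dn2: "2 ^ Suc a dvd n" using less.prems(2) dvd_trans by blast
        have d1: "2 ^ a dvd (n - 2 ^ a)" using dn by (simp add: dvd_diff_nat)
        have d2: "\<not> 2 ^ Suc a dvd (n - 2 ^ a)"
        proof
          assume "2 ^ Suc a dvd (n - 2 ^ a)"
          then have "2 ^ Suc a dvd (n - (n - 2 ^ a))" using dn2 by (simp add: dvd_diff_nat)
          then have "2 ^ Suc a dvd (2::nat) ^ a" using lt by simp
          then show False using dvd_imp_le[of "2 ^ Suc a" "(2::nat) ^ a"] by simp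
        qed
        have "sg (n - 2 ^ a) = 2 ^ a" using less.IH[of "n - 2 ^ a" a] lt d1 d2 by simp
        moreover have "2 ^ a \<in> divs n" using dn by (simp add: divs_def)
        ultimately show ?thesis by (simp add: F_def)
      qed
      have Fn: "F n = 0" by (simp add: F_def sg0)
      have "nim_sum F S = k"
      proof (rule bit_eqI)
        fix i
        have "{d\<in>S. bit (F d) i} = (if i < p \<and> bit k i then {2 ^ i} else {})"
        proof -
          have "{d\<in>S. bit (F d) i} = {d\<in>T. bit (F d) i}"
            unfolding S_def using Fn by auto
          also have "\<dots> = (\<lambda>a. (2::nat) ^ a) ` {a. a < p \<and> bit k a \<and> a = i}"
          proof -
            have "bit (F (2 ^ a)) i = (a = i)" if "a < p" for a
              using FT[OF that] by (auto simp add: bit_exp_iff)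
            then show ?thesis unfolding T_def by blast
          qed
          also have "\<dots> = (if i < p \<and> bit k i then {2 ^ i} else {})"
            by (cases "i < p \<and> bit k i") auto
          finally show ?thesis .
        qed
        then have "bit (nim_sum F S) i = (i < p \<and> bit k i)"
          using bit_nim_sum[OF fS, of F i] by auto
        then show "bit (nim_sum F S) i = bit k i" using high_bits[OF k] by auto
      qed
      moreover have "S \<noteq> {}" by (simp add: S_def)
      ultimately show ?thesis using Ssub unfolding A_def by blast
    qed
    have "mex A = 2 ^ p"
      unfolding mex_def
      proof (rule Least_equality)
      show "2 ^ p \<notin> A" by (rule notin)
      fix y assume "y \<notin> A"
      then show "2 ^ p \<le> y" using isin by (meson not_le)
    qed
    then show ?case using sgn by simp
  qed
  show ?thesis using main sg0 by simp
qed

end
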